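(* Let $0\le r\le n$ and let $T=P(x,u_0,\dots,u_r)$, with $P$ a real polynomial, satisfy $T(\mathcal P_n)\subset\mathcal P_n$. If $r<n/2$, then $P$ has total degree at most $1$ in the variables $u_0,\dots,u_r$ (i.e. $T$ is linear up to an additive term $p(x)$). If $r<2n/3$, then $P$ has total degree at most $2$ in $u_0,\dots,u_r$.
   Context: Operators of order $\le r$ are identified with polynomials $P(x,u_0,\dots,u_r)$ acting on smooth $f$ by $P[f](x)=P(x,f(x),f'(x),\dots,f^{(r)}(x))$. $\mathcal P_s$ denotes the space of real polynomials in $x$ of degree at most $s$. *)

theory Defs
  imports Complex_Main "HOL-Computational_Algebra.Polynomial"
begin

text \<open>A real polynomial P(x,u_0,...,u_r) is represented by its coefficient function:
  c k a is the coefficient of the monomial x^k * u_0^(a 0) * ... * u_r^(a r).\<close>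

definition poly_coeffs :: "nat \<Rightarrow> (nat \<Rightarrow> (nat \<Rightarrow> nat) \<Rightarrow> real) \<Rightarrow> bool" where
  "poly_coeffs r c \<longleftrightarrow> finite {(k, a). c k a \<noteq> 0} \<and>
     (\<forall>k a. c k a \<noteq> 0 \<longrightarrow> (\<forall>j>r. a j = 0))"

definition peval :: "nat \<Rightarrow> (nat \<Rightarrow> (nat \<Rightarrow> nat) \<Rightarrow> real) \<Rightarrow> real \<Rightarrow> (nat \<Rightarrow> real) \<Rightarrow> real" where
  "peval r c x u = (\<Sum>(k, a)\<in>{(k, a). c k a \<noteq> 0}. c k a * x ^ k * (\<Prod>j\<le>r. u j ^ a j))"

definition op_apply :: "nat \<Rightarrow> (nat \<Rightarrow> (nat \<Rightarrow> nat) \<Rightarrow> real) \<Rightarrow> real poly \<Rightarrow> real \<Rightarrow> real" where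
  "op_apply r c f x = peval r c x (\<lambda>j. poly ((pderiv ^^ j) f) x)"

definition udeg_le :: "nat \<Rightarrow> (nat \<Rightarrow> (nat \<Rightarrow> nat) \<Rightarrow> real) \<Rightarrow> nat \<Rightarrow> bool" where
  "udeg_le r c d \<longleftrightarrow> (\<forall>k a. c k a \<noteq> 0 \<longrightarrow> (\<Sum>j\<le>r. a j) \<le> d)"

definition preserves_Pn :: "nat \<Rightarrow> (nat \<Rightarrow> (nat \<Rightarrow> nat) \<Rightarrow> real) \<Rightarrow> nat \<Rightarrow> bool" where
  "preserves_Pn r c n \<longleftrightarrow> (\<forall>f::real poly. degree f \<le> n \<longrightarrow>
      (\<exists>g::real poly. degree g \<le> n \<and> (\<forall>x. op_apply r c f x = poly g x)))"

end

theory Submission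
  imports Defs
begin


lemma hpd_lin_pow:
  fixes a :: real
  shows "(pderiv ^^ i) ([:-a,1:]^m) = smult (\<Prod>l<i. real (m - l)) ([:-a,1:]^(m - i))"
proof (induction i)
  case 0 then show ?case by simp
next
  case (Suc i)
  have "(pderiv ^^ Suc i) ([:-a,1:]^m) = pderiv (smult (\<Prod>l<i. real (m - l)) ([:-a,1:]^(m - i)))"
    using Suc by simp
  also have "\<dots> = smult (\<Prod>l<Suc i. real (m - l)) ([:-a,1:]^(m - Suc i))"
  proof (cases "m - i")
    case 0
    then show ?thesis by (simp add: pderiv_smult)
  next
    case (Suc k)
    then have k: "m - Suc i = k" by simp
    have d: "pderiv [:-a,1:] = 1" by (simp add: pderiv_pCons)
    have "pderiv ([:-a,1:]^(m - i)) = smult (real (m - i)) ([:-a,1:]^k)"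
      unfolding Suc pderiv_power_Suc d using Suc by simp
    moreover have "real m - real i = 1 + real k" using Suc by (simp add: of_nat_diff)
    ultimately show ?thesis using Suc
      by (simp add: pderiv_smult k)
  qed
  finally show ?case .
qed

inductive hom :: "nat \<Rightarrow> nat \<Rightarrow> real poly \<Rightarrow> (real poly \<Rightarrow> real poly) \<Rightarrow> bool" for r where
  hzero: "hom r D W (\<lambda>g. 0)"
| hconst: "hom r 0 W (\<lambda>g. W * p)"
| hmult: "hom r D W A \<Longrightarrow> j \<le> r \<Longrightarrow> hom r (Suc D) W (\<lambda>g. A g * (pderiv ^^ j) g)"
| hadd: "hom r D W A \<Longrightarrow> hom r D W B \<Longrightarrow> hom r D W (\<lambda>g. A g + B g)"

lemma hom_cong: "hom r D W A \<Longrightarrow> (\<And>g. A g = B g) \<Longrightarrow> hom r D W B"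
proof -
  assume "hom r D W A" "\<And>g. A g = B g"
  then have "A = B" by auto
  then show ?thesis using \<open>hom r D W A\<close> by simp
qed

lemma hom_dvd: "hom r D W A \<Longrightarrow> W dvd A g"
  by (induction rule: hom.induct) auto

lemma hom_scale: "hom r D W A \<Longrightarrow> A (smult s g) = smult (s ^ D) (A g)"
  by (induction rule: hom.induct) (auto simp: higher_pderiv_smult algebra_simps smult_add_right)

lemma hom_mulP: "hom r D W A \<Longrightarrow> hom r D (W * P) (\<lambda>g. A g * (P * q))"
proof (induction rule: hom.induct)
  case (hzero D W)
  then show ?case using hom.hzero by simp
next
  case (hconst W p)
  then show ?case using hom.hconst[of r "W * P" "p * q"] by (simp add: algebra_simps)
next
  case (hmult D W A j)
  then show ?case using hom.hmult[OF hmult(3) hmult(2)] by (rule_tac hom_cong) (auto simp: algebra_simps)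
next
  case (hadd D W A B)
  then show ?case using hom.hadd[OF hadd(3) hadd(4)] by (rule_tac hom_cong) (auto simp: algebra_simps)
qed

lemma hom_expand:
  assumes "hom r D W A" "\<forall>j\<le>r. P dvd (pderiv ^^ j) h"
  shows "\<exists>X. (\<forall>b\<le>D. hom r (D - b) (W * P ^ b) (X b)) \<and> (\<forall>b>D. \<forall>g. X b g = 0)
     \<and> (\<forall>g s. A (g + smult s h) = (\<Sum>b\<le>D. smult (s ^ b) (X b g)))"
  using assms(1)
proof induction
  case (hzero D W)
  show ?case by (rule exI[of _ "\<lambda>b g. 0"]) (auto intro: hom.hzero)
next
  case (hconst W p)
  show ?case
    by (rule exI[of _ "\<lambda>b g. if b = 0 then W * p else 0"]) (auto intro: hom_cong[OF hom.hconst])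
next
  case (hmult D W A j)
  from hmult.IH obtain X where X1: "\<forall>b\<le>D. hom r (D - b) (W * P ^ b) (X b)"
    and X2: "\<forall>b>D. \<forall>g. X b g = 0"
    and X3: "\<forall>g s. A (g + smult s h) = (\<Sum>b\<le>D. smult (s ^ b) (X b g))" by blast
  from assms(2) hmult.hyps(2) obtain q where q: "(pderiv ^^ j) h = P * q" by (auto elim!: dvdE)
  define Y where "Y = (\<lambda>b g. X b g * (pderiv ^^ j) g + (case b of 0 \<Rightarrow> 0 | Suc b' \<Rightarrow> X b' g * (pderiv ^^ j) h))"
  have Y1: "hom r (Suc D - b) (W * P ^ b) (Y b)" if b: "b \<le> Suc D" for b
  proof (cases b)
    case 0
    have "hom r (Suc D) W (\<lambda>g. X 0 g * (pderiv ^^ j) g)"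
      using hom.hmult[OF _ hmult.hyps(2)] X1 by auto
    then have "hom r (Suc D) W (Y 0)" by (rule hom_cong) (simp add: Y_def)
    then show ?thesis using 0 by simp
  next
    case (Suc b')
    have h1: "hom r (D - b') (W * P ^ b) (\<lambda>g. X b g * (pderiv ^^ j) g)"
    proof (cases "b \<le> D")
      case True
      have "hom r (Suc (D - b)) (W * P ^ b) (\<lambda>g. X b g * (pderiv ^^ j) g)"
        using hom.hmult[OF _ hmult.hyps(2)] X1 True by auto
      moreover have "Suc (D - b) = D - b'" using True Suc by simp
      ultimately show ?thesis by simp
    next
      case False
      then show ?thesis using X2 by (intro hom_cong[OF hom.hzero]) auto
    qed
    have "hom r (D - b') (W * P ^ b' * P) (\<lambda>g. X b' g * (P * q))"
      using hom_mulP X1 Suc b by auto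
    then have h2: "hom r (D - b') (W * P ^ b) (\<lambda>g. X b' g * (pderiv ^^ j) h)"
      unfolding q Suc by (simp add: algebra_simps)
    have "hom r (D - b') (W * P ^ b) (\<lambda>g. X b g * (pderiv ^^ j) g + X b' g * (pderiv ^^ j) h)" by (rule hom.hadd[OF h1 h2])
    then have "hom r (D - b') (W * P ^ b) (Y b)" unfolding Y_def Suc by (rule hom_cong) auto
    then show ?thesis using Suc by simp
  qed
  have Y2: "\<forall>b>Suc D. \<forall>g. Y b g = 0"
    using X2 unfolding Y_def by (auto split: nat.split)
  have Y3: "(\<lambda>g. A g * (pderiv ^^ j) g) (g + smult s h) = (\<Sum>b\<le>Suc D. smult (s ^ b) (Y b g))" for g s
  proof -
    have "(\<Sum>b\<le>Suc D. smult (s ^ b) (Y b g)) =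
      (\<Sum>b\<le>Suc D. smult (s ^ b) (X b g * (pderiv ^^ j) g)) +
      (\<Sum>b\<le>Suc D. smult (s ^ b) (case b of 0 \<Rightarrow> 0 | Suc b' \<Rightarrow> X b' g * (pderiv ^^ j) h))"
      unfolding Y_def by (simp add: smult_add_right sum.distrib)
    also have "(\<Sum>b\<le>Suc D. smult (s ^ b) (X b g * (pderiv ^^ j) g)) = (\<Sum>b\<le>D. smult (s ^ b) (X b g * (pderiv ^^ j) g))"
      using X2 by simp
    also have "(\<Sum>b\<le>Suc D. smult (s ^ b) (case b of 0 \<Rightarrow> 0 | Suc b' \<Rightarrow> X b' g * (pderiv ^^ j) h))
       = (\<Sum>b\<le>D. smult (s ^ Suc b) (X b g * (pderiv ^^ j) h))"
      by (subst sum.atMost_Suc_shift) simp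
    finally have e: "(\<Sum>b\<le>Suc D. smult (s ^ b) (Y b g)) = (\<Sum>b\<le>D. smult (s ^ b) (X b g * (pderiv ^^ j) g)) + (\<Sum>b\<le>D. smult (s ^ Suc b) (X b g * (pderiv ^^ j) h))" .
    have "(\<lambda>g. A g * (pderiv ^^ j) g) (g + smult s h) = (\<Sum>b\<le>D. smult (s ^ b) (X b g)) * ((pderiv ^^ j) g + smult s ((pderiv ^^ j) h))"
      using X3 by (simp add: higher_pderiv_add higher_pderiv_smult)
    also have "\<dots> = (\<Sum>b\<le>D. smult (s ^ b) (X b g * (pderiv ^^ j) g)) + (\<Sum>b\<le>D. smult (s ^ Suc b) (X b g * (pderiv ^^ j) h))"
    proof -
      have "(\<Sum>b\<le>D. smult (s ^ b) (X b g)) * ((pderiv ^^ j) g + smult s ((pderiv ^^ j) h))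
        = (\<Sum>b\<le>D. smult (s ^ b) (X b g) * ((pderiv ^^ j) g + smult s ((pderiv ^^ j) h)))"
        by (rule sum_distrib_right)
      also have "\<dots> = (\<Sum>b\<le>D. smult (s ^ b) (X b g * (pderiv ^^ j) g) + smult (s ^ Suc b) (X b g * (pderiv ^^ j) h))"
        by (rule sum.cong) (simp_all add: distrib_left mult_smult_left mult_smult_right smult_smult mult_ac)
      finally show ?thesis by (simp add: sum.distrib)
    qed
    finally show ?thesis using e by simp
  qed
  show ?case using Y1 Y2 Y3 by blast
next
  case (hadd D W A B)
  from hadd.IH(1) obtain X where X1: "\<forall>b\<le>D. hom r (D - b) (W * P ^ b) (X b)"
    and X2: "\<forall>b>D. \<forall>g. X b g = 0"
    and X3: "\<forall>g s. A (g + smult s h) = (\<Sum>b\<le>D. smult (s ^ b) (X b g))" by blast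
  from hadd.IH(2) obtain Z where Z1: "\<forall>b\<le>D. hom r (D - b) (W * P ^ b) (Z b)"
    and Z2: "\<forall>b>D. \<forall>g. Z b g = 0"
    and Z3: "\<forall>g s. B (g + smult s h) = (\<Sum>b\<le>D. smult (s ^ b) (Z b g))" by blast
  show ?case
    apply (rule exI[of _ "\<lambda>b g. X b g + Z b g"])
    using X1 X2 X3 Z1 Z2 Z3 by (auto intro: hom.hadd simp: smult_add_right sum.distrib)
qed

lemma sep_coeffs:
  fixes b :: "nat \<Rightarrow> real"
  assumes "finite D" "\<forall>s. (\<Sum>d\<in>D. s ^ d * b d) = 0" "d \<in> D"
  shows "b d = 0"
proof -
  let ?q = "\<Sum>d\<in>D. monom (b d) d"
  have "poly ?q s = 0" for s using assms(2) by (simp add: poly_sum poly_monom mult.commute)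
  then have "?q = 0" using poly_all_0_iff_0 by blast
  then have "coeff ?q d = 0" by simp
  moreover have "coeff ?q d = b d" using assms by (simp add: coeff_sum coeff_monom)
  ultimately show ?thesis by simp
qed

lemma sep_deg:
  fixes X :: "nat \<Rightarrow> real poly"
  assumes "finite D" "\<forall>s. degree (\<Sum>d\<in>D. smult (s ^ d) (X d)) \<le> n" "d \<in> D"
  shows "degree (X d) \<le> n"
proof (rule degree_le, intro allI impI)
  fix i assume i: "n < i"
  have "\<forall>s. (\<Sum>d\<in>D. s ^ d * coeff (X d) i) = 0"
  proof
    fix s
    have "coeff (\<Sum>d\<in>D. smult (s ^ d) (X d)) i = 0"
      using assms(2) i by (intro coeff_eq_0) (meson le_less_trans)
    then show "(\<Sum>d\<in>D. s ^ d * coeff (X d) i) = 0" by (simp add: coeff_sum)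
  qed
  then show "coeff (X d) i = 0" using sep_coeffs[of D "\<lambda>d. coeff (X d) i" d] assms by blast
qed

inductive_set tspan :: "nat \<Rightarrow> real poly set" for n where
  tz: "0 \<in> tspan n"
| ts: "g \<in> tspan n \<Longrightarrow> g + smult s ([:-t,1:]^n) \<in> tspan n"

lemma tspan_deg: "f \<in> tspan n \<Longrightarrow> degree f \<le> n"
proof (induction rule: tspan.induct)
  case tz then show ?case by simp
next
  case (ts g s t)
  have "degree (smult s ([:-t,1:]^n)) \<le> n"
    by (metis degree_linear_power degree_smult_le)
  then show ?case using ts degree_add_le by blast
qed

lemma hom_vanish:
  assumes "f \<in> tspan n" "r \<le> n"
  shows "hom r D W A \<Longrightarrow> W \<noteq> 0 \<Longrightarrow> (\<forall>g. degree g \<le> n \<longrightarrow> degree (A g) \<le> n)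
     \<Longrightarrow> n < degree W + D * (n - r) \<Longrightarrow> A f = 0"
  using assms(1)
proof (induction arbitrary: D W A)
  case tz
  show ?case
  proof (cases D)
    case 0
    have dv: "W dvd A 0" using hom_dvd tz by blast
    have "degree (A 0) \<le> n" using tz by simp
    show ?thesis
    proof (rule ccontr)
      assume "A 0 \<noteq> 0"
      then have "degree W \<le> degree (A 0)" using dv dvd_imp_degree_le by blast
      then show False using tz 0 \<open>degree (A 0) \<le> n\<close> by simp
    qed
  next
    case (Suc D')
    have "A (smult 0 0) = smult (0 ^ D) (A 0)" using hom_scale tz by blast
    then show ?thesis using Suc by simp
  qed
next
  case (ts g s t)
  define h where "h = [:-t,1:]^n"
  define P where "P = [:-t,1:]^(n - r)"
  have Pdvd: "\<forall>j\<le>r. P dvd (pderiv ^^ j) h"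
  proof (intro allI impI)
    fix j assume "j \<le> r"
    then have "P dvd [:-t,1:]^(n - j)" unfolding P_def by (intro le_imp_power_dvd) simp
    then show "P dvd (pderiv ^^ j) h" unfolding h_def hpd_lin_pow[of j "t" n, simplified] by (rule dvd_smult)
  qed
  obtain X where X1: "\<forall>b\<le>D. hom r (D - b) (W * P ^ b) (X b)"
    and X3: "\<forall>g s. A (g + smult s h) = (\<Sum>b\<le>D. smult (s ^ b) (X b g))"
    using hom_expand[OF ts.prems(1) Pdvd] by blast
  have hdeg: "degree h \<le> n" unfolding h_def by (simp add: degree_linear_power)
  have P0: "P \<noteq> 0" unfolding P_def by simp
  have degP: "degree P = n - r" unfolding P_def by (simp add: degree_linear_power)
  have "X b g = 0" if b: "b \<le> D" for b
  proof (rule ts.IH)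
    show "hom r (D - b) (W * P ^ b) (X b)" using X1 b by simp
    show "W * P ^ b \<noteq> 0" using ts.prems(2) P0 by simp
    show "\<forall>g. degree g \<le> n \<longrightarrow> degree (X b g) \<le> n"
    proof (intro allI impI)
      fix g' :: "real poly" assume g': "degree g' \<le> n"
      have "\<forall>s. degree (\<Sum>b\<le>D. smult (s ^ b) (X b g')) \<le> n"
      proof
        fix s
        have "degree (g' + smult s h) \<le> n"
          using g' hdeg by (meson degree_add_le degree_smult_le order_trans)
        then show "degree (\<Sum>b\<le>D. smult (s ^ b) (X b g')) \<le> n"
          using ts.prems(3) X3 by metis
      qed
      then show "degree (X b g') \<le> n" using sep_deg[of "{..D}" "\<lambda>b. X b g'" n b] b by simp
    qed
    have "degree (W * P ^ b) = degree W + b * (n - r)"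
      using ts.prems(2) P0 by (simp add: degree_mult_eq degree_power_eq degP)
    moreover have "b * (n - r) + (D - b) * (n - r) = D * (n - r)"
      using b by (metis add_mult_distrib le_add_diff_inverse)
    ultimately show "n < degree (W * P ^ b) + (D - b) * (n - r)"
      using ts.prems(4) by simp
  qed
  then show ?case using X3 unfolding h_def by simp
qed

lemma tspan_add: "f2 \<in> tspan n \<Longrightarrow> f1 \<in> tspan n \<Longrightarrow> f1 + f2 \<in> tspan n"
proof (induction rule: tspan.induct)
  case tz then show ?case by simp
next
  case (ts g s t)
  then have "(f1 + g) + smult s ([:-t,1:]^n) \<in> tspan n" by (intro tspan.ts) simp
  then show ?case by (simp add: add.assoc)
qed

lemma tspan_smult: "f \<in> tspan n \<Longrightarrow> smult c f \<in> tspan n"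
proof (induction rule: tspan.induct)
  case tz then show ?case by (simp add: tspan.tz)
next
  case (ts g s t)
  then have "smult c g + smult (c * s) ([:-t,1:]^n) \<in> tspan n" by (intro tspan.ts)
  then show ?case by (simp add: smult_add_right)
qed

lemma tspan_sum: "finite I \<Longrightarrow> (\<forall>i\<in>I. F i \<in> tspan n) \<Longrightarrow> (\<Sum>i\<in>I. F i) \<in> tspan n"
  by (induction I rule: finite_induct) (auto intro: tspan.tz tspan_add)

lemma tspan_pow: "smult s ([:a,1:]^n) \<in> tspan n"
  using tspan.ts[OF tspan.tz, where s=s and t="-a"] by simp

definition LL :: "nat \<Rightarrow> nat \<Rightarrow> real poly" where
  "LL n i = (\<Prod>k\<in>{..n}-{i}. [:-real k, 1:])"

lemma LL_other: "j \<le> n \<Longrightarrow> j \<noteq> i \<Longrightarrow> poly (LL n i) (real j) = 0"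
  unfolding LL_def poly_prod by (rule prod_zero) auto

lemma LL_self: "poly (LL n i) (real i) \<noteq> 0"
  unfolding LL_def poly_prod by (subst prod_zero_iff) auto

lemma LL_deg: "i \<le> n \<Longrightarrow> degree (LL n i) \<le> n"
proof -
  assume i: "i \<le> n"
  have "degree (LL n i) \<le> (\<Sum>k\<in>{..n}-{i}. degree [:-real k, 1:])"
    unfolding LL_def using degree_prod_sum_le[of "{..n}-{i}" "\<lambda>k. [:-real k, 1:]"] by (simp add: o_def)
  also have "\<dots> = card ({..n}-{i})" by simp
  also have "\<dots> = n" using i by (simp add: card_Diff_singleton)
  finally show ?thesis by simp
qed

lemma lagrange_monom:
  assumes "m \<le> n"
  shows "monom 1 m = (\<Sum>i\<le>n. smult (real i ^ m / poly (LL n i) (real i)) (LL n i))"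
proof (rule poly_eqI_degree[of "real ` {..n}"])
  fix x assume "x \<in> real ` {..n}"
  then obtain j where j: "j \<le> n" "x = real j" by auto
  have "poly (\<Sum>i\<le>n. smult (real i ^ m / poly (LL n i) (real i)) (LL n i)) x
      = (\<Sum>i\<le>n. (real i ^ m / poly (LL n i) (real i)) * poly (LL n i) (real j))"
    using j by (simp add: poly_sum)
  also have "\<dots> = (\<Sum>i\<in>{j}. (real i ^ m / poly (LL n i) (real i)) * poly (LL n i) (real j))"
    using j by (intro sum.mono_neutral_right) (auto simp: LL_other)
  also have "\<dots> = real j ^ m" using LL_self[of n j] by simp
  finally show "poly (monom 1 m) x = poly (\<Sum>i\<le>n. smult (real i ^ m / poly (LL n i) (real i)) (LL n i)) x"
    using j by (simp add: poly_monom)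
next
  have "card (real ` {..n}) = Suc n" by (subst card_image) (auto simp: inj_on_def)
  then show "degree (monom (1::real) m) < card (real ` {..n})" using assms by (simp add: degree_monom_eq)
  have "degree (\<Sum>i\<le>n. smult (real i ^ m / poly (LL n i) (real i)) (LL n i)) \<le> n"
    by (intro degree_sum_le) (auto intro!: order_trans[OF degree_smult_le] LL_deg)
  then show "degree (\<Sum>i\<le>n. smult (real i ^ m / poly (LL n i) (real i)) (LL n i)) < card (real ` {..n})"
    using \<open>card (real ` {..n}) = Suc n\<close> by simp
qed

lemma monom_tspan:
  assumes "k0 \<le> n"
  shows "monom 1 k0 \<in> tspan n"
proof -
  define \<alpha> where "\<alpha> i = coeff (LL n i) (n - k0) / poly (LL n i) (real i)" for i
  have mom: "(\<Sum>i\<le>n. real i ^ m * \<alpha> i) = (if m = n - k0 then 1 else 0)" if "m \<le> n" for m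
  proof -
    have "coeff (monom (1::real) m) (n - k0) = (\<Sum>i\<le>n. real i ^ m * \<alpha> i)"
      unfolding lagrange_monom[OF that] \<alpha>_def by (simp add: coeff_sum)
    then show ?thesis by (simp add: coeff_monom)
  qed
  define F where "F = (\<Sum>i\<le>n. smult (\<alpha> i) ([:real i, 1:]^n))"
  have "F \<in> tspan n" unfolding F_def by (intro tspan_sum) (auto intro: tspan_pow)
  have "F = smult (real (n choose k0)) (monom 1 k0)"
  proof (rule poly_eqI)
    fix k
    show "coeff F k = coeff (smult (real (n choose k0)) (monom 1 k0)) k"
    proof (cases "k \<le> n")
      case True
      have "coeff F k = (\<Sum>i\<le>n. \<alpha> i * (real (n choose k) * real i ^ (n - k)))"
        unfolding F_def using True by (simp add: coeff_sum coeff_linear_poly_power)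
      also have "\<dots> = real (n choose k) * (\<Sum>i\<le>n. real i ^ (n - k) * \<alpha> i)"
        by (simp add: sum_distrib_left mult_ac)
      also have "\<dots> = real (n choose k) * (if n - k = n - k0 then 1 else 0)" using mom[of "n - k"] by simp
      also have "\<dots> = coeff (smult (real (n choose k0)) (monom 1 k0)) k"
        using True assms by (auto simp: coeff_monom)
      finally show ?thesis .
    next
      case False
      have "degree F \<le> n" unfolding F_def
        by (intro degree_sum_le) (auto intro: order_trans[OF degree_smult_le] simp: degree_linear_power)
      then have "coeff F k = 0" using False by (intro coeff_eq_0) simp
      then show ?thesis using False assms by (simp add: coeff_monom)
    qed
  qed
  then have "smult (1 / real (n choose k0)) F = monom 1 k0"
    using assms by simp
  then show ?thesis using tspan_smult[OF \<open>F \<in> tspan n\<close>] by metis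
qed

lemma all_tspan:
  assumes "degree (p::real poly) \<le> n"
  shows "p \<in> tspan n"
proof -
  have "p = (\<Sum>k\<le>n. smult (coeff p k) (monom 1 k))"
    using assms by (subst poly_as_sum_of_monoms'[symmetric, OF assms]) (simp add: smult_monom)
  also have "\<dots> \<in> tspan n" by (intro tspan_sum) (auto intro: tspan_smult monom_tspan)
  finally show ?thesis .
qed

lemma jets:
  fixes x0 :: real and u :: "nat \<Rightarrow> real"
  shows "\<exists>f. degree f \<le> r \<and> (\<forall>j\<le>r. poly ((pderiv ^^ j) f) x0 = u j)"
proof -
  define f where "f = (\<Sum>i\<le>r. smult (u i / fact i) ([:-x0,1:]^i))"
  have "degree f \<le> r" unfolding f_def
    by (intro degree_sum_le) (auto intro!: order_trans[OF degree_smult_le] simp: degree_linear_power)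
  moreover have "poly ((pderiv ^^ j) f) x0 = u j" if j: "j \<le> r" for j
  proof -
    have "poly ((pderiv ^^ j) f) x0 = (\<Sum>i\<le>r. u i / fact i * ((\<Prod>l<j. real (i - l)) * 0 ^ (i - j)))"
      unfolding f_def by (simp add: higher_pderiv_sum higher_pderiv_smult hpd_lin_pow poly_sum poly_power mult.assoc)
    also have "\<dots> = (\<Sum>i\<in>{j}. u i / fact i * ((\<Prod>l<j. real (i - l)) * 0 ^ (i - j)))"
    proof (intro sum.mono_neutral_right)
      show "\<forall>i\<in>{..r} - {j}. u i / fact i * ((\<Prod>l<j. real (i - l)) * 0 ^ (i - j)) = 0"
      proof
        fix i assume i: "i \<in> {..r} - {j}"
        show "u i / fact i * ((\<Prod>l<j. real (i - l)) * 0 ^ (i - j)) = 0"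
        proof (cases "i < j")
          case True
          then have "(\<Prod>l<j. real (i - l)) = 0" by (intro prod_zero) (auto intro!: bexI[of _ i])
          then show ?thesis by simp
        next
          case False
          then show ?thesis using i by simp
        qed
      qed
    qed (use j in auto)
    also have "\<dots> = u j" 
    proof -
      have "(\<Prod>l<j. real (j - l)) = fact j"
        by (simp add: fact_prod_rev atLeast0LessThan of_nat_prod)
      then show ?thesis by simp
    qed
    finally show ?thesis .
  qed
  ultimately show ?thesis by blast
qed



lemma digits_inj:
  fixes N :: nat
  assumes "\<forall>j\<le>m. a j < N" "\<forall>j\<le>m. b j < N" "(\<Sum>j\<le>m. a j * N ^ j) = (\<Sum>j\<le>m. b j * N ^ j)"
  shows "\<forall>j\<le>m. a j = b j"
  using assms
proof (induction m arbitrary: a b)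
  case 0 then show ?case by simp
next
  case (Suc m)
  have ea: "(\<Sum>j\<le>Suc m. a j * N ^ j) = a 0 + N * (\<Sum>j\<le>m. a (Suc j) * N ^ j)" for a
    by (subst sum.atMost_Suc_shift) (simp add: sum_distrib_left mult_ac)
  have a0: "a 0 < N" "b 0 < N" using Suc.prems by auto
  from Suc.prems(3) have E: "a 0 + N * (\<Sum>j\<le>m. a (Suc j) * N ^ j) = b 0 + N * (\<Sum>j\<le>m. b (Suc j) * N ^ j)"
    unfolding ea .
  then have "(a 0 + N * (\<Sum>j\<le>m. a (Suc j) * N ^ j)) mod N = (b 0 + N * (\<Sum>j\<le>m. b (Suc j) * N ^ j)) mod N"
    by simp
  then have "a 0 = b 0" using a0 by simp
  with E have "(\<Sum>j\<le>m. a (Suc j) * N ^ j) = (\<Sum>j\<le>m. b (Suc j) * N ^ j)" using a0 by simp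
  then have "\<forall>j\<le>m. a (Suc j) = b (Suc j)"
  proof -
    have h1: "\<forall>j\<le>m. a (Suc j) < N" using Suc.prems(1) by (metis Suc_le_mono)
    have h2: "\<forall>j\<le>m. b (Suc j) < N" using Suc.prems(2) by (metis Suc_le_mono)
    show ?thesis using Suc.IH[of "\<lambda>j. a (Suc j)" "\<lambda>j. b (Suc j)", OF h1 h2] \<open>(\<Sum>j\<le>m. a (Suc j) * N ^ j) = (\<Sum>j\<le>m. b (Suc j) * N ^ j)\<close>
      by blast
  qed
  show ?case
  proof (intro allI impI)
    fix j assume j: "j \<le> Suc m"
    show "a j = b j"
    proof (cases j)
      case 0 then show ?thesis using \<open>a 0 = b 0\<close> by simp
    next
      case (Suc j') then show ?thesis using j \<open>\<forall>j\<le>m. a (Suc j) = b (Suc j)\<close> by simp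
    qed
  qed
qed



lemma kron:
  fixes b :: "nat \<Rightarrow> (nat \<Rightarrow> nat) \<Rightarrow> real" and S :: "(nat \<times> (nat \<Rightarrow> nat)) set"
  assumes fin: "finite S" and supp: "\<forall>(k,a)\<in>S. \<forall>j>r. a j = 0"
    and z: "\<forall>x (u::nat \<Rightarrow> real). (\<Sum>(k,a)\<in>S. b k a * x ^ k * (\<Prod>j\<le>r. u j ^ a j)) = 0"
    and mem: "(k0, a0) \<in> S"
  shows "b k0 a0 = 0"
proof -
  define N where "N = Suc (\<Sum>(k,a)\<in>S. k + (\<Sum>j\<le>r. a j))"
  have bnd: "k < N \<and> (\<forall>j\<le>r. a j < N)" if "(k,a) \<in> S" for k a
  proof -
    have "k + (\<Sum>j\<le>r. a j) \<le> (\<Sum>(k,a)\<in>S. k + (\<Sum>j\<le>r. a j))"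
      using member_le_sum[OF that, of "\<lambda>(k,a). k + (\<Sum>j\<le>r. a j)"] fin by simp
    moreover have "a j \<le> (\<Sum>j\<le>r. a j)" if "j \<le> r" for j
      using member_le_sum[of j "{..r}" a] that by simp
    ultimately show ?thesis unfolding N_def by fastforce
  qed
  define enc where "enc = (\<lambda>(k::nat, a::nat \<Rightarrow> nat). k + N * (\<Sum>j\<le>r. a j * N ^ j))"
  have inj: "p = q" if "p \<in> S" "q \<in> S" "enc p = enc q" for p q
  proof -
    obtain k a where p: "p = (k,a)" by force
    obtain k' a' where q: "q = (k',a')" by force
    have b1: "k < N" "\<forall>j\<le>r. a j < N" using bnd that p by auto
    have b2: "k' < N" "\<forall>j\<le>r. a' j < N" using bnd that q by auto
    have E: "k + N * (\<Sum>j\<le>r. a j * N ^ j) = k' + N * (\<Sum>j\<le>r. a' j * N ^ j)"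
      using that p q unfolding enc_def by simp
    then have "(k + N * (\<Sum>j\<le>r. a j * N ^ j)) mod N = (k' + N * (\<Sum>j\<le>r. a' j * N ^ j)) mod N" by simp
    then have kk: "k = k'" using b1 b2 by simp
    with E have "(\<Sum>j\<le>r. a j * N ^ j) = (\<Sum>j\<le>r. a' j * N ^ j)" using b1 by simp
    then have "\<forall>j\<le>r. a j = a' j" using digits_inj b1 b2 by blast
    moreover have "\<forall>j>r. a j = 0 \<and> a' j = 0" using supp that p q by auto
    ultimately have "a = a'" by (metis not_le ext)
    then show ?thesis using p q kk by simp
  qed
  define Q where "Q = (\<Sum>p\<in>S. monom (b (fst p) (snd p)) (enc p))"
  have "poly Q y = 0" for y
  proof -
    have "poly Q y = (\<Sum>p\<in>S. b (fst p) (snd p) * y ^ enc p)"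
      unfolding Q_def by (simp add: poly_sum poly_monom)
    also have "\<dots> = (\<Sum>(k,a)\<in>S. b k a * y ^ k * (\<Prod>j\<le>r. (y ^ (N ^ Suc j)) ^ a j))"
    proof (rule sum.cong)
      fix p assume "p \<in> S"
      obtain k a where p: "p = (k,a)" by force
      have "(\<Prod>j\<le>r. (y ^ (N ^ Suc j)) ^ a j) = y ^ (N * (\<Sum>j\<le>r. a j * N ^ j))"
        by (simp add: power_sum sum_distrib_left power_mult[symmetric] mult_ac)
      then show "b (fst p) (snd p) * y ^ enc p = (case p of (k, a) \<Rightarrow> b k a * y ^ k * (\<Prod>j\<le>r. (y ^ (N ^ Suc j)) ^ a j))"
        unfolding p enc_def by (simp add: power_add)
    qed simp
    also have "\<dots> = 0" using spec[OF spec[OF z, of y], of "\<lambda>j. y ^ (N ^ Suc j)"] by simp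
    finally show ?thesis .
  qed
  then have "Q = 0" using poly_all_0_iff_0 by blast
  then have "coeff Q (enc (k0,a0)) = 0" by simp
  moreover have "coeff Q (enc (k0,a0)) = b k0 a0"
  proof -
    have "coeff Q (enc (k0,a0)) = (\<Sum>p\<in>S. if p = (k0,a0) then b (fst p) (snd p) else 0)"
      unfolding Q_def coeff_sum coeff_monom
      by (rule sum.cong) (use inj mem in auto)
    also have "\<dots> = b k0 a0" using mem fin by simp
    finally show ?thesis .
  qed
  ultimately show ?thesis by simp
qed




lemma hom_pow: "hom r D W A \<Longrightarrow> j \<le> r \<Longrightarrow> hom r (D + e) W (\<lambda>g. A g * ((pderiv ^^ j) g) ^ e)"
proof (induction e)
  case 0 then show ?case by simp
next
  case (Suc e)
  have "hom r (Suc (D + e)) W (\<lambda>g. (A g * ((pderiv ^^ j) g) ^ e) * (pderiv ^^ j) g)"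
    using Suc by (intro hom.hmult) auto
  then show ?case by simp (rule hom_cong, assumption, simp add: mult_ac)
qed

lemma hom_prod: "hom r D W A \<Longrightarrow> m \<le> r \<Longrightarrow>
   hom r (D + (\<Sum>j\<le>m. a j)) W (\<lambda>g. A g * (\<Prod>j\<le>m. ((pderiv ^^ j) g) ^ a j))"
proof (induction m)
  case 0
  then show ?case using hom_pow[OF 0(1), of 0 "a 0"] by simp
next
  case (Suc m)
  have "hom r (D + (\<Sum>j\<le>m. a j)) W (\<lambda>g. A g * (\<Prod>j\<le>m. ((pderiv ^^ j) g) ^ a j))"
    using Suc by simp
  from hom_pow[OF this, of "Suc m" "a (Suc m)"] Suc.prems
  have "hom r (D + (\<Sum>j\<le>m. a j) + a (Suc m)) W
     (\<lambda>g. A g * (\<Prod>j\<le>m. ((pderiv ^^ j) g) ^ a j) * ((pderiv ^^ Suc m) g) ^ a (Suc m))" by simp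
  then show ?case by (simp add: add.assoc) (rule hom_cong, assumption, simp add: mult_ac)
qed

lemma hom_sum: "finite I \<Longrightarrow> (\<forall>i\<in>I. hom r D W (F i)) \<Longrightarrow> hom r D W (\<lambda>g. \<Sum>i\<in>I. F i g)"
proof (induction I rule: finite_induct)
  case empty then show ?case by (simp add: hom.hzero)
next
  case (insert i I)
  then have "hom r D W (\<lambda>g. F i g + (\<Sum>i\<in>I. F i g))" by (intro hom.hadd) auto
  then show ?case using insert by simp
qed

definition Opd :: "nat \<Rightarrow> (nat \<Rightarrow> (nat \<Rightarrow> nat) \<Rightarrow> real) \<Rightarrow> nat \<Rightarrow> real poly \<Rightarrow> real poly" where
  "Opd r c d g = (\<Sum>p\<in>{p\<in>{(k, a). c k a \<noteq> 0}. (\<Sum>j\<le>r. snd p j) = d}.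
      smult (c (fst p) (snd p)) (monom 1 (fst p) * (\<Prod>j\<le>r. ((pderiv ^^ j) g) ^ snd p j)))"

lemma Opd_hom:
  assumes "finite {(k, a). c k a \<noteq> 0}"
  shows "hom r d 1 (Opd r c d)"
proof -
  have "hom r d 1 (\<lambda>g. smult (c (fst p) (snd p)) (monom 1 (fst p) * (\<Prod>j\<le>r. ((pderiv ^^ j) g) ^ snd p j)))"
    if "(\<Sum>j\<le>r. snd p j) = d" for p
  proof -
    have "hom r (0 + (\<Sum>j\<le>r. snd p j)) 1 (\<lambda>g. 1 * smult (c (fst p) (snd p)) (monom 1 (fst p)) * (\<Prod>j\<le>r. ((pderiv ^^ j) g) ^ snd p j))"
      by (rule hom_prod[OF hom.hconst]) simp
    then show ?thesis using that by simp
  qed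
  then have "hom r d 1 (\<lambda>g. \<Sum>p\<in>{p\<in>{(k, a). c k a \<noteq> 0}. (\<Sum>j\<le>r. snd p j) = d}.
      smult (c (fst p) (snd p)) (monom 1 (fst p) * (\<Prod>j\<le>r. ((pderiv ^^ j) g) ^ snd p j)))"
    using assms by (intro hom_sum) auto
  then show ?thesis unfolding Opd_def[abs_def] .
qed

lemma poly_Opd: "poly (Opd r c d g) x = (\<Sum>p\<in>{p\<in>{(k, a). c k a \<noteq> 0}. (\<Sum>j\<le>r. snd p j) = d}.
      c (fst p) (snd p) * x ^ fst p * (\<Prod>j\<le>r. poly ((pderiv ^^ j) g) x ^ snd p j))"
  unfolding Opd_def by (simp add: poly_sum poly_prod poly_power poly_monom mult_ac)

lemma op_apply_Opd:
  assumes "finite {(k, a). c k a \<noteq> 0}"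
  shows "op_apply r c g x = poly (\<Sum>d\<in>(\<lambda>p. \<Sum>j\<le>r. snd p j) ` {(k, a). c k a \<noteq> 0}. Opd r c d g) x"
proof -
  let ?S = "{(k, a). c k a \<noteq> 0}"
  let ?F = "\<lambda>p. c (fst p) (snd p) * x ^ fst p * (\<Prod>j\<le>r. poly ((pderiv ^^ j) g) x ^ snd p j)"
  have "op_apply r c g x = (\<Sum>p\<in>?S. ?F p)"
    unfolding op_apply_def peval_def by (rule sum.cong) auto
  also have "\<dots> = (\<Sum>d\<in>(\<lambda>p. \<Sum>j\<le>r. snd p j) ` ?S. \<Sum>p\<in>{p\<in>?S. (\<Sum>j\<le>r. snd p j) = d}. ?F p)"
    by (rule sum.group[symmetric]) (use assms in auto)
  also have "\<dots> = poly (\<Sum>d\<in>(\<lambda>p. \<Sum>j\<le>r. snd p j) ` ?S. Opd r c d g) x"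
    by (simp add: poly_sum poly_Opd)
  finally show ?thesis .
qed

lemma key:
  assumes rn: "r \<le> n" and pc: "poly_coeffs r c" and pr: "preserves_Pn r c n"
    and d0: "n < d0 * (n - r)"
  shows "\<forall>k a. c k a \<noteq> 0 \<longrightarrow> (\<Sum>j\<le>r. a j) < d0"
proof (intro allI impI, rule ccontr)
  fix k0 a0 assume c0: "c k0 a0 \<noteq> 0" and ge: "\<not> (\<Sum>j\<le>r. a0 j) < d0"
  let ?S = "{(k, a). c k a \<noteq> 0}"
  let ?deg = "\<lambda>p. \<Sum>j\<le>r. snd p j"
  let ?Ds = "?deg ` ?S"
  define d where "d = (\<Sum>j\<le>r. a0 j)"
  have fin: "finite ?S" and supp: "\<forall>k a. c k a \<noteq> 0 \<longrightarrow> (\<forall>j>r. a j = 0)"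
    using pc unfolding poly_coeffs_def by auto
  have dD: "d \<in> ?Ds" unfolding d_def using c0 by (auto intro!: image_eqI[of _ _ "(k0, a0)"])
  have pres: "degree (Opd r c d f) \<le> n" if f: "degree f \<le> n" for f
  proof -
    have "\<forall>s. degree (\<Sum>d\<in>?Ds. smult (s ^ d) (Opd r c d f)) \<le> n"
    proof
      fix s
      have "degree (smult s f) \<le> n" using f by (meson degree_smult_le order_trans)
      then obtain h where h: "degree h \<le> n" "\<forall>x. op_apply r c (smult s f) x = poly h x"
        using pr unfolding preserves_Pn_def by blast
      have "poly (\<Sum>d\<in>?Ds. smult (s ^ d) (Opd r c d f)) x = poly h x" for x
      proof -
        have "poly (\<Sum>d\<in>?Ds. smult (s ^ d) (Opd r c d f)) x = poly (\<Sum>d\<in>?Ds. Opd r c d (smult s f)) x"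
          using hom_scale[OF Opd_hom[OF fin]] by simp
        also have "\<dots> = op_apply r c (smult s f) x" using op_apply_Opd[OF fin] by simp
        finally show ?thesis using h by simp
      qed
      then have "(\<Sum>d\<in>?Ds. smult (s ^ d) (Opd r c d f)) = h" by (intro poly_ext) 
      then show "degree (\<Sum>d\<in>?Ds. smult (s ^ d) (Opd r c d f)) \<le> n" using h by simp
    qed
    then show ?thesis using sep_deg[of ?Ds "\<lambda>d. Opd r c d f" n d] dD fin by simp
  qed
  have van: "Opd r c d f = 0" if "degree f \<le> n" for f
  proof (rule hom_vanish[OF all_tspan[OF that] rn Opd_hom[OF fin]])
    show "(1::real poly) \<noteq> 0" by simp
    show "\<forall>g. degree g \<le> n \<longrightarrow> degree (Opd r c d g) \<le> n" using pres by blast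
    have "d0 \<le> d" using ge d_def by simp
    then have "d0 * (n - r) \<le> d * (n - r)" by (rule mult_le_mono1)
    then show "n < degree (1::real poly) + d * (n - r)" using d0 by (simp only: degree_1 add_0)
  qed
  have "\<forall>x (u::nat \<Rightarrow> real). (\<Sum>(k,a)\<in>{p\<in>?S. ?deg p = d}. c k a * x ^ k * (\<Prod>j\<le>r. u j ^ a j)) = 0"
  proof (intro allI)
    fix x :: real and u :: "nat \<Rightarrow> real"
    obtain f where f: "degree f \<le> r" "\<forall>j\<le>r. poly ((pderiv ^^ j) f) x = u j" using jets by blast
    have "poly (Opd r c d f) x = 0" using van f rn by simp
    moreover have "poly (Opd r c d f) x = (\<Sum>(k,a)\<in>{p\<in>?S. ?deg p = d}. c k a * x ^ k * (\<Prod>j\<le>r. u j ^ a j))"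
      unfolding poly_Opd using f by (intro sum.cong) (auto intro!: prod.cong)
    ultimately show "(\<Sum>(k,a)\<in>{p\<in>?S. ?deg p = d}. c k a * x ^ k * (\<Prod>j\<le>r. u j ^ a j)) = 0" by simp
  qed
  then have "c k0 a0 = 0"
    by (rule kron[of "{p\<in>?S. ?deg p = d}" r c k0 a0, rotated 2]) (use fin supp c0 d_def in auto)
  then show False using c0 by simp
qed

theorem mainTheorem4:
  fixes r n :: nat and c :: "nat \<Rightarrow> (nat \<Rightarrow> nat) \<Rightarrow> real"
  assumes "r \<le> n"
    and "poly_coeffs r c"
    and "preserves_Pn r c n"
  shows "(real r < real n / 2 \<longrightarrow> udeg_le r c 1)
       \<and> (real r < 2 * real n / 3 \<longrightarrow> udeg_le r c 2)"
proof (intro conjI impI)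
  assume "real r < real n / 2"
  then have "2 * r < n" by linarith
  then have "n < 2 * (n - r)" by simp
  from key[OF assms this] show "udeg_le r c 1" unfolding udeg_le_def by fastforce
next
  assume "real r < 2 * real n / 3"
  then have "3 * r < 2 * n" by linarith
  then have "n < 3 * (n - r)" by simp
  from key[OF assms this] show "udeg_le r c 2" unfolding udeg_le_def by fastforce
qed


end
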